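(* Let $0<a,b<1$, let $f\ge3$ be an integer, and let $\overline w_{m,n}$ ($m,n\ge0$, $m\ne n$) be as defined in the context. For $0\le m\le n-2$ put $[\overline w]_{m,n}:=\overline w_{m,n}\overline w_{m+1,n+1}-\overline w_{m,n+1}\overline w_{m+1,n}$. Then (with all indices nonnegative): 1. $[\overline w]_{f-\ell,f+j}=a^2r^2z^4(1-a)(1-b)x_a^{\ell-2}x(a,b)x_b^{j-1}$ for $\ell\ge2$, $j\ge1$; 2. $[\overline w]_{f-\ell,f}=a^2r^2z^4(1-a)(1-b)x_a^{\ell-2}$ for $\ell\ge2$; 3. $[\overline w]_{f-1,f+j}=b^2r^2z^4(1-a)(1-b)x_b^{j-1}$ for $j\ge1$; 4. $[\overline w]_{m,m+\ell}=a^2r^2z^4(1-a)^2x_a^{\ell-2}$ for $\ell\ge2$, $m+\ell\le f-1$; 5. $[\overline w]_{m,m+j}=b^2r^2z^4(1-b)^2x_b^{j-2}$ for $f\le m$, $j\ge2$.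
   Context: Let $r,y,z$ be indeterminates. For $c\in(0,1)$: $\omega_c:=1-(1-c)^2r^2y^2z^2$, $\tau_c:=1+(1-c)^2r^2z^2y(1-y)$, $x_c:=c^2z^2\tau_c^2$, $\beta_c:=1+z^2(c^2-(1-c)^2r^2(y^2+c^2(1-y)^2z^2))$; $w^*_0(c):=(\beta_c-\omega_c)/x_c$, $w^*_1(c):=1$, $w^*_{n+1}(c):=\beta_cw^*_n(c)-x_cw^*_{n-1}(c)$ ($n\ge1$). Also $\omega(a,b):=1-(1-a)(1-b)r^2y^2z^2$, $\tau(a,b):=1+(1-a)(1-b)r^2z^2y(1-y)$, $x(a,b):=b^2z^2\tau(a,b)^2$, $x(b,a):=a^2z^2\tau(a,b)^2$, $\beta(a,b):=\beta_b-(b-a)b^2(1-b)r^2(1-y)^2z^4$, $\beta(b,a):=\beta_a-(a-b)a^2(1-a)r^2(1-y)^2z^4$. Define $\overline w_{m,m+1}=\overline w_{m+1,m}:=1$ for $m\ge0$, and for $n-m\ge2$ (all indices $\ge0$): upward: (U1) $\overline w_{m,m+\ell}:=w^*_\ell(a)$ if $m+\ell\le f$, and $:=w^*_\ell(b)$ if $f\le m$; (U2) $\overline w_{f-\ell,f+1}:=\frac{1-b}{1-a}w^*_{\ell+1}(a)+\frac{b-a}{1-a}w^*_\ell(a)$, $1\le\ell\le f$; (U3) $\overline w_{m,f+2}:=\beta(a,b)\overline w_{m,f+1}-x(a,b)\overline w_{m,f}$, $m\le f-1$; (U4) $\overline w_{m,f+j+1}:=\beta_b\overline w_{m,f+j}-x_b\overline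 w_{m,f+j-1}$, $m\le f-1$, $j\ge2$. Downward: (D1) $\overline w_{m+\ell,m}:=w^*_\ell(a)$ if $m+\ell\le f-1$, and $:=w^*_\ell(b)$ if $f-1\le m$; (D2) $\overline w_{f+j,f-2}:=\frac{1-a}{1-b}w^*_{j+2}(b)+\frac{a-b}{1-b}w^*_{j+1}(b)$, $j\ge0$; (D3) $\overline w_{n,f-3}:=\beta(b,a)\overline w_{n,f-2}-x(b,a)\overline w_{n,f-1}$, $n\ge f$; (D4) $\overline w_{n,f-\ell-2}:=\beta_a\overline w_{n,f-\ell-1}-x_a\overline w_{n,f-\ell}$, $n\ge f$, $\ell\ge2$. (In particular $\overline w_{f-1,f+1}=\omega(a,b)=\overline w_{f,f-2}$.) *)

theory Defs
  imports Complex_Main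
begin

(* The indeterminates r, y, z are modelled as arbitrary real numbers. *)

definition omc :: "real \<Rightarrow> real \<Rightarrow> real \<Rightarrow> real \<Rightarrow> real" where
  "omc c r y z = 1 - (1-c)^2 * r^2 * y^2 * z^2"

definition tauc :: "real \<Rightarrow> real \<Rightarrow> real \<Rightarrow> real \<Rightarrow> real" where
  "tauc c r y z = 1 + (1-c)^2 * r^2 * z^2 * y * (1-y)"

definition xc :: "real \<Rightarrow> real \<Rightarrow> real \<Rightarrow> real \<Rightarrow> real" where
  "xc c r y z = c^2 * z^2 * (tauc c r y z)^2"

definition betac :: "real \<Rightarrow> real \<Rightarrow> real \<Rightarrow> real \<Rightarrow> real" where
  "betac c r y z = 1 + z^2 * (c^2 - (1-c)^2 * r^2 * (y^2 + c^2 * (1-y)^2 * z^2))"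

fun wstar :: "real \<Rightarrow> real \<Rightarrow> real \<Rightarrow> real \<Rightarrow> nat \<Rightarrow> real" where
  "wstar c r y z 0 = (betac c r y z - omc c r y z) / xc c r y z"
| "wstar c r y z (Suc 0) = 1"
| "wstar c r y z (Suc (Suc n)) =
     betac c r y z * wstar c r y z (Suc n) - xc c r y z * wstar c r y z n"

definition om2 :: "real \<Rightarrow> real \<Rightarrow> real \<Rightarrow> real \<Rightarrow> real \<Rightarrow> real" where
  "om2 a b r y z = 1 - (1-a) * (1-b) * r^2 * y^2 * z^2"

definition tau2 :: "real \<Rightarrow> real \<Rightarrow> real \<Rightarrow> real \<Rightarrow> real \<Rightarrow> real" where
  "tau2 a b r y z = 1 + (1-a) * (1-b) * r^2 * z^2 * y * (1-y)"

definition xab :: "real \<Rightarrow> real \<Rightarrow> real \<Rightarrow> real \<Rightarrow> real \<Rightarrow> real" where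
  "xab a b r y z = b^2 * z^2 * (tau2 a b r y z)^2"

definition xba :: "real \<Rightarrow> real \<Rightarrow> real \<Rightarrow> real \<Rightarrow> real \<Rightarrow> real" where
  "xba a b r y z = a^2 * z^2 * (tau2 a b r y z)^2"

definition betaab :: "real \<Rightarrow> real \<Rightarrow> real \<Rightarrow> real \<Rightarrow> real \<Rightarrow> real" where
  "betaab a b r y z = betac b r y z - (b-a) * b^2 * (1-b) * r^2 * (1-y)^2 * z^4"

definition betaba :: "real \<Rightarrow> real \<Rightarrow> real \<Rightarrow> real \<Rightarrow> real \<Rightarrow> real" where
  "betaba a b r y z = betac a r y z - (a-b) * a^2 * (1-a) * r^2 * (1-y)^2 * z^4"

text \<open>Upward entries: upc ... m k = wbar_{m, f+1+k} for m \<le> f-1 (rules U2, U3, U4).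
  Note wbar_{m,f} = w*_{f-m}(a) (rule U1, or = 1 = w*_1 when m = f-1).\<close>
fun upc :: "real \<Rightarrow> real \<Rightarrow> nat \<Rightarrow> real \<Rightarrow> real \<Rightarrow> real \<Rightarrow> nat \<Rightarrow> nat \<Rightarrow> real" where
  "upc a b f r y z m 0 =
     (1-b)/(1-a) * wstar a r y z (f-m+1) + (b-a)/(1-a) * wstar a r y z (f-m)"
| "upc a b f r y z m (Suc 0) =
     betaab a b r y z * upc a b f r y z m 0
     - xab a b r y z * (if m + 1 = f then 1 else wstar a r y z (f-m))"
| "upc a b f r y z m (Suc (Suc k)) =
     betac b r y z * upc a b f r y z m (Suc k) - xc b r y z * upc a b f r y z m k"

text \<open>Downward entries: downc ... p k = wbar_{p, f-2-k} for p \<ge> f (rules D2, D3, D4).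
  Note wbar_{p,f-1} = w*_{p-f+1}(b) (rule D1, or = 1 = w*_1 when p = f).\<close>
fun downc :: "real \<Rightarrow> real \<Rightarrow> nat \<Rightarrow> real \<Rightarrow> real \<Rightarrow> real \<Rightarrow> nat \<Rightarrow> nat \<Rightarrow> real" where
  "downc a b f r y z p 0 =
     (1-a)/(1-b) * wstar b r y z (p-f+2) + (a-b)/(1-b) * wstar b r y z (p-f+1)"
| "downc a b f r y z p (Suc 0) =
     betaba a b r y z * downc a b f r y z p 0
     - xba a b r y z * (if p = f then 1 else wstar b r y z (p-f+1))"
| "downc a b f r y z p (Suc (Suc k)) =
     betac a r y z * downc a b f r y z p (Suc k) - xc a r y z * downc a b f r y z p k"

definition wbar :: "real \<Rightarrow> real \<Rightarrow> nat \<Rightarrow> real \<Rightarrow> real \<Rightarrow> real \<Rightarrow> nat \<Rightarrow> nat \<Rightarrow> real" where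
  "wbar a b f r y z m n =
    (if m < n then
       (if n = m + 1 then 1
        else if n \<le> f then wstar a r y z (n - m)
        else if f \<le> m then wstar b r y z (n - m)
        else upc a b f r y z m (n - f - 1))
     else if n < m then
       (if m = n + 1 then 1
        else if m \<le> f - 1 then wstar a r y z (m - n)
        else if f - 1 \<le> n then wstar b r y z (m - n)
        else downc a b f r y z m (f - 2 - n))
     else undefined)"

definition wbr :: "real \<Rightarrow> real \<Rightarrow> nat \<Rightarrow> real \<Rightarrow> real \<Rightarrow> real \<Rightarrow> nat \<Rightarrow> nat \<Rightarrow> real" where
  "wbr a b f r y z m n =
     wbar a b f r y z m n * wbar a b f r y z (m+1) (n+1)
     - wbar a b f r y z m (n+1) * wbar a b f r y z (m+1) n"

end

theory Submission imports Defs begin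

lemma ws2: "xc c r y z \<noteq> 0 \<Longrightarrow> wstar c r y z 2 = omc c r y z"
  by (simp add: numeral_2_eq_2)

lemma cas_gen:
  fixes U V :: "nat \<Rightarrow> real"
  assumes "\<And>k. U (Suc (Suc k)) = \<beta> * U (Suc k) - x * U k"
      and "\<And>k. V (Suc (Suc k)) = \<beta> * V (Suc k) - x * V k"
  shows "U j * V (Suc j) - U (Suc j) * V j = x ^ j * (U 0 * V 1 - U 1 * V 0)"
proof (induction j)
  case 0 then show ?case by simp
next
  case (Suc j)
  have "U (Suc j) * V (Suc (Suc j)) - U (Suc (Suc j)) * V (Suc j)
      = x * (U j * V (Suc j) - U (Suc j) * V j)"
    by (simp add: assms algebra_simps)
  then show ?case using Suc by simp
qed

lemma E0: "xc c r y z \<noteq> 0 \<Longrightarrow>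
  xc c r y z * (1 - wstar c r y z 0 * wstar c r y z 2) = c^2 * r^2 * z^4 * (1-c)^2"
  apply (simp add: numeral_2_eq_2 field_simps)
  apply (simp add: xc_def tauc_def betac_def omc_def)
  apply algebra
  done

lemma casws: "xc c r y z \<noteq> 0 \<Longrightarrow>
  wstar c r y z (Suc n) ^ 2 - wstar c r y z n * wstar c r y z (Suc (Suc n))
   = xc c r y z ^ n * (1 - wstar c r y z 0 * wstar c r y z 2)"
  using cas_gen[of "wstar c r y z" "betac c r y z" "xc c r y z" "\<lambda>k. wstar c r y z (Suc k)" n]
  by (simp add: power2_eq_square numeral_2_eq_2 algebra_simps)

lemma wb_a: "m < n \<Longrightarrow> n \<le> f \<Longrightarrow> wbar a b f r y z m n = wstar a r y z (n-m)"
  by (simp add: wbar_def)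
lemma wb_b: "f \<le> m \<Longrightarrow> m < n \<Longrightarrow> wbar a b f r y z m n = wstar b r y z (n-m)"
  by (auto simp add: wbar_def)
lemma wb_u: "m < f \<Longrightarrow> f < n \<Longrightarrow> wbar a b f r y z m n = upc a b f r y z m (n-f-1)"
  by (simp add: wbar_def)

lemma upc1: "m < f \<Longrightarrow> upc a b f r y z m 1 =
   betaab a b r y z * upc a b f r y z m 0 - xab a b r y z * wstar a r y z (f-m)"
  using upc.simps(2)[of a b f r y z m] by (cases "m+1=f") auto

lemma upcrec: "upc a b f r y z m (Suc (Suc k)) = betac b r y z * upc a b f r y z m (Suc k) - xc b r y z * upc a b f r y z m k"
  by simp

lemma G3: "0 < f \<Longrightarrow> a < 1 \<Longrightarrow> xc a r y z \<noteq> 0 \<Longrightarrow> xc b r y z \<noteq> 0 \<Longrightarrow>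
  upc a b f r y z (f-1) 0 * omc b r y z - (betaab a b r y z * upc a b f r y z (f-1) 0 - xab a b r y z)
   = b^2 * r^2 * z^4 * (1-a) * (1-b)"
proof -
  assume h0: "0 < f" and h: "a < 1" "xc a r y z \<noteq> 0" "xc b r y z \<noteq> 0"
  have f: "f - (f - 1) = 1 \<or> f = 0" by auto
  have u: "upc a b f r y z (f-1) 0 = ((1-b) * omc a r y z + (b-a)) / (1-a)"
    using f h h0 by (simp add: ws2[OF h(2)] add_divide_distrib)
  have na: "1 - a \<noteq> 0" using h by simp
  have P: "((1-b) * omc a r y z + (b-a)) * (omc b r y z - betaab a b r y z) + xab a b r y z * (1-a)
     = b^2 * r^2 * z^4 * (1-a) * (1-b) * (1-a)"
    unfolding xab_def tau2_def betaab_def betac_def omc_def by algebra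
  define U where "U = upc a b f r y z (f-1) 0"
  have U1: "U * (1-a) = (1-b) * omc a r y z + (b-a)" unfolding U_def u using na by simp
  have "(U * omc b r y z - (betaab a b r y z * U - xab a b r y z)) * (1-a)
     = (U * (1-a)) * (omc b r y z - betaab a b r y z) + xab a b r y z * (1-a)"
    by (simp add: algebra_simps)
  also have "\<dots> = b^2 * r^2 * z^4 * (1-a) * (1-b) * (1-a)" unfolding U1 P ..
  finally show ?thesis using na unfolding U_def by simp
qed
lemma Aw: "2 \<le> l \<Longrightarrow> xc c r y z \<noteq> 0 \<Longrightarrow>
  wstar c r y z l * wstar c r y z l - wstar c r y z (l+1) * wstar c r y z (l-1)
   = c^2 * r^2 * z^4 * (1-c)^2 * xc c r y z ^ (l-2)"
proof -
  assume h: "2 \<le> l" "xc c r y z \<noteq> 0"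
  then obtain k where k: "l = Suc (Suc k)" by (metis add_2_eq_Suc le_Suc_ex)
  have "wstar c r y z l * wstar c r y z l - wstar c r y z (l+1) * wstar c r y z (l-1)
     = xc c r y z ^ (Suc k) * (1 - wstar c r y z 0 * wstar c r y z 2)"
    using casws[OF h(2), of "Suc k"] unfolding k by (simp add: power2_eq_square mult.commute)
  also have "\<dots> = xc c r y z ^ k * (xc c r y z * (1 - wstar c r y z 0 * wstar c r y z 2))"
    by simp
  also have "\<dots> = c^2 * r^2 * z^4 * (1-c)^2 * xc c r y z ^ (l-2)"
    unfolding E0[OF h(2)] k by simp
  finally show ?thesis .
qed

lemma Bw: "m + 2 \<le> f \<Longrightarrow> a < 1 \<Longrightarrow> xc a r y z \<noteq> 0 \<Longrightarrow>
  wstar a r y z (f-m) * upc a b f r y z (m+1) 0 - upc a b f r y z m 0 * wstar a r y z (f-m-1)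
   = a^2 * r^2 * z^4 * (1-a) * (1-b) * xc a r y z ^ (f-m-2)"
proof -
  assume h: "m + 2 \<le> f" "a < 1" "xc a r y z \<noteq> 0"
  define l where "l = f - m"
  have l2: "2 \<le> l" using h unfolding l_def by simp
  have e1: "f - (m+1) + 1 = l" "f - (m+1) = l - 1" "f - m + 1 = l + 1" "f-m = l" "f-m-1 = l-1" "f-m-2 = l-2"
    using h unfolding l_def by auto
  have na: "1 - a \<noteq> 0" using h by simp
  define W where "W = wstar a r y z"
  have u0: "upc a b f r y z m 0 = (1-b)/(1-a) * W (l+1) + (b-a)/(1-a) * W l"
    unfolding upc.simps(1) W_def e1 ..
  have e3: "l - 1 + 1 = l" using l2 by simp
  have u1: "upc a b f r y z (m+1) 0 = (1-b)/(1-a) * W l + (b-a)/(1-a) * W (l-1)"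
    unfolding upc.simps(1) W_def e1 e3 ..
  have "wstar a r y z (f-m) * upc a b f r y z (m+1) 0 - upc a b f r y z m 0 * wstar a r y z (f-m-1)
     = W l * ((1-b)/(1-a) * W l + (b-a)/(1-a) * W (l-1))
       - ((1-b)/(1-a) * W (l+1) + (b-a)/(1-a) * W l) * W (l-1)"
    unfolding u0 u1 e1 W_def ..
  also have "\<dots> = (1-b)/(1-a) * (W l * W l - W (l+1) * W (l-1))"
    by (simp add: algebra_simps)
  also have "\<dots> = (1-b)/(1-a) * (a^2 * r^2 * z^4 * (1-a)^2 * xc a r y z ^ (l-2))"
    unfolding W_def using Aw[OF l2 h(3)] by simp
  also have "\<dots> = a^2 * r^2 * z^4 * (1-a) * (1-b) * xc a r y z ^ (l-2) * ((1-a) / (1-a))"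
    by (simp only: power2_eq_square times_divide_eq_left times_divide_eq_right mult_ac)
  also have "\<dots> = a^2 * r^2 * z^4 * (1-a) * (1-b) * xc a r y z ^ (f-m-2)"
    using na by (simp add: e1)
  finally show ?thesis .
qed

theorem proposition2:
  fixes a b r y z :: real and f :: nat
  assumes "0 < a" "a < 1" "0 < b" "b < 1" "3 \<le> f"
    and "xc a r y z \<noteq> 0" "xc b r y z \<noteq> 0"
  shows
    "(\<forall>l j. 2 \<le> l \<longrightarrow> l \<le> f \<longrightarrow> 1 \<le> j \<longrightarrow>
        wbr a b f r y z (f - l) (f + j) =
          a^2 * r^2 * z^4 * (1-a) * (1-b) * xc a r y z ^ (l - 2) * xab a b r y z
          * xc b r y z ^ (j - 1))
   \<and> (\<forall>l. 2 \<le> l \<longrightarrow> l \<le> f \<longrightarrow>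
        wbr a b f r y z (f - l) f = a^2 * r^2 * z^4 * (1-a) * (1-b) * xc a r y z ^ (l - 2))
   \<and> (\<forall>j. 1 \<le> j \<longrightarrow>
        wbr a b f r y z (f - 1) (f + j) = b^2 * r^2 * z^4 * (1-a) * (1-b) * xc b r y z ^ (j - 1))
   \<and> (\<forall>m l. 2 \<le> l \<longrightarrow> m + l \<le> f - 1 \<longrightarrow>
        wbr a b f r y z m (m + l) = a^2 * r^2 * z^4 * (1-a)^2 * xc a r y z ^ (l - 2))
   \<and> (\<forall>m j. f \<le> m \<longrightarrow> 2 \<le> j \<longrightarrow>
        wbr a b f r y z m (m + j) = b^2 * r^2 * z^4 * (1-b)^2 * xc b r y z ^ (j - 2))"
proof (intro conjI allI impI)
  fix l j :: nat
  assume h: "2 \<le> l" "l \<le> f" "1 \<le> j"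
  define m where "m = f - l"
  have mf: "m + 2 \<le> f" "m < f" "m + 1 < f" "f - m - 2 = l - 2" using h unfolding m_def by auto
  define U where "U = upc a b f r y z m"
  define V where "V = upc a b f r y z (m+1)"
  have G: "U (j-1) * V (Suc (j-1)) - U (Suc (j-1)) * V (j-1)
       = xc b r y z ^ (j-1) * (U 0 * V 1 - U 1 * V 0)"
    by (rule cas_gen[of _ "betac b r y z" "xc b r y z"]) (simp_all add: U_def V_def)
  have U1: "U 1 = betaab a b r y z * U 0 - xab a b r y z * wstar a r y z (f-m)"
    unfolding U_def using upc1 mf by blast
  have V1: "V 1 = betaab a b r y z * V 0 - xab a b r y z * wstar a r y z (f-m-1)"
    unfolding V_def using upc1[of "m+1" f] mf by (simp add: diff_diff_add)
  have G0: "U 0 * V 1 - U 1 * V 0 = xab a b r y z *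
      (wstar a r y z (f-m) * V 0 - U 0 * wstar a r y z (f-m-1))"
    unfolding U1 V1 by (simp add: algebra_simps)
  have wb: "wbr a b f r y z (f - l) (f + j) = U (j-1) * V (Suc (j-1)) - U (Suc (j-1)) * V (j-1)"
    unfolding wbr_def m_def[symmetric] using mf h
    by (simp add: wb_u U_def V_def)
  show "wbr a b f r y z (f - l) (f + j) =
          a^2 * r^2 * z^4 * (1-a) * (1-b) * xc a r y z ^ (l - 2) * xab a b r y z
          * xc b r y z ^ (j - 1)"
    unfolding wb G G0 using Bw[OF mf(1) assms(2) assms(6), of b] mf(4)
    by (simp add: U_def V_def)
next
  fix l :: nat
  assume h: "2 \<le> l" "l \<le> f"
  define m where "m = f - l"
  have mf: "m + 2 \<le> f" "m < f" "m + 1 < f" "f - m - 2 = l - 2" using h unfolding m_def by auto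
  have "wbr a b f r y z (f - l) f = wstar a r y z (f-m) * upc a b f r y z (m+1) 0
      - upc a b f r y z m 0 * wstar a r y z (f-m-1)"
    unfolding wbr_def m_def[symmetric] using mf
    by (simp add: wb_u wb_a)
  then show "wbr a b f r y z (f - l) f = a^2 * r^2 * z^4 * (1-a) * (1-b) * xc a r y z ^ (l - 2)"
    using Bw[OF mf(1) assms(2) assms(6), of b] mf(4) by simp
next
  fix j :: nat
  assume h: "1 \<le> j"
  define U where "U = upc a b f r y z (f-1)"
  define V where "V = (\<lambda>k. wstar b r y z (Suc k))"
  have G: "U (j-1) * V (Suc (j-1)) - U (Suc (j-1)) * V (j-1)
       = xc b r y z ^ (j-1) * (U 0 * V 1 - U 1 * V 0)"
    by (rule cas_gen[of _ "betac b r y z" "xc b r y z"]) (simp_all add: U_def V_def)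
  have U1: "U 1 = betaab a b r y z * U 0 - xab a b r y z"
    unfolding U_def using upc1[of "f-1" f] assms(5) by simp
  have G0: "U 0 * V 1 - U 1 * V 0 = b^2 * r^2 * z^4 * (1-a) * (1-b)"
    unfolding U1 using G3[of f a r y z b] assms
    by (simp add: V_def U_def ws2 numeral_2_eq_2[symmetric])
  have wb: "wbr a b f r y z (f - 1) (f + j) = U (j-1) * V (Suc (j-1)) - U (Suc (j-1)) * V (j-1)"
    unfolding wbr_def using h assms(5)
    by (simp add: wb_u wb_b U_def V_def)
  show "wbr a b f r y z (f - 1) (f + j) = b^2 * r^2 * z^4 * (1-a) * (1-b) * xc b r y z ^ (j - 1)"
    unfolding wb G G0 by simp
next
  fix m l :: nat
  assume h: "2 \<le> l" "m + l \<le> f - 1"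
  have "wbr a b f r y z m (m + l) = wstar a r y z l * wstar a r y z l
     - wstar a r y z (l+1) * wstar a r y z (l-1)"
    unfolding wbr_def using h by (simp add: wb_a)
  then show "wbr a b f r y z m (m + l) = a^2 * r^2 * z^4 * (1-a)^2 * xc a r y z ^ (l - 2)"
    using Aw[OF h(1) assms(6)] by simp
next
  fix m j :: nat
  assume h: "f \<le> m" "2 \<le> j"
  have "wbr a b f r y z m (m + j) = wstar b r y z j * wstar b r y z j
     - wstar b r y z (j+1) * wstar b r y z (j-1)"
    unfolding wbr_def using h by (simp add: wb_b)
  then show "wbr a b f r y z m (m + j) = b^2 * r^2 * z^4 * (1-b)^2 * xc b r y z ^ (j - 2)"
    using Aw[OF h(2) assms(7)] by simp
qed
end
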